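(* Let $f$ satisfy $(\mathcal A)$, let $t_0>0$ and let $\tau:[t_0,+\infty[\to\,]0,+\infty[$ be twice continuously differentiable with $\dot\tau(t)>0$ for all $t$ and $\lim_{t\to+\infty}\tau(t)=+\infty$. Let $x:[t_0,+\infty[\to\mathcal H$ be a twice continuously differentiable solution of $$\ddot x(t)+\frac{2\dot\tau(t)^2-\tau(t)\ddot\tau(t)}{\tau(t)\dot\tau(t)}\dot x(t)+\frac{\dot\tau(t)^2}{\tau(t)}\nabla f\Big(x(t)+\frac{\tau(t)}{\dot\tau(t)}\dot x(t)\Big)=0 .$$ Then $f(x(t))-\inf_{\mathcal H}f=o\big(\ln(\tau(t))/\tau(t)\big)$ as $t\to+\infty$, and $x(t)$ converges weakly as $t\to+\infty$ to an element of $S=\operatorname{argmin} f$. If moreover there exist $\theta>0$ and $C_1>0$ such that $\tau(t)\ge C_1(t-t_0)^\theta$ for all sufficiently large $t$, then $f(x(t))-\inf_{\mathcal H}f=o\big(\ln(t)/t^\theta\big)$ as $t\to+\infty$.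
   Context: $\mathcal H$ is a real Hilbert space. Assumption $(\mathcal A)$: $f:\mathcal H\to\mathbb R$ is convex and continuously differentiable, $S=\operatorname{argmin}_{\mathcal H} f\neq\emptyset$, and $\nabla f$ is Lipschitz continuous on bounded subsets of $\mathcal H$. *)

theory Defs
  imports "HOL-Analysis.Analysis" "HOL-Library.Landau_Symbols"
begin

definition argmin_set :: "('a \<Rightarrow> real) \<Rightarrow> 'a set" where
  "argmin_set f = {x. \<forall>y. f x \<le> f y}"

definition lipschitz_on_bounded :: "('a::real_normed_vector \<Rightarrow> 'b::real_normed_vector) \<Rightarrow> bool" where
  "lipschitz_on_bounded g \<longleftrightarrow>
     (\<forall>B. bounded B \<longrightarrow> (\<exists>L. \<forall>u\<in>B. \<forall>v\<in>B. norm (g u - g v) \<le> L * norm (u - v)))"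

definition assumption_A :: "('a::{real_inner,complete_space} \<Rightarrow> real) \<Rightarrow> ('a \<Rightarrow> 'a) \<Rightarrow> bool" where
  "assumption_A f gradf \<longleftrightarrow>
     convex_on UNIV f \<and>
     (\<forall>z. (f has_derivative (\<lambda>h. gradf z \<bullet> h)) (at z)) \<and>
     continuous_on UNIV gradf \<and>
     argmin_set f \<noteq> {} \<and>
     lipschitz_on_bounded gradf"

definition weakly_tendsto_at_top :: "(real \<Rightarrow> 'a::real_inner) \<Rightarrow> 'a \<Rightarrow> bool" where
  "weakly_tendsto_at_top x z \<longleftrightarrow> (\<forall>y. ((\<lambda>t. x t \<bullet> y) \<longlongrightarrow> z \<bullet> y) at_top)"

end

theory Submission
  imports Defs "HOL-Real_Asymp.Real_Asymp"
begin

lemma antimono_deriv_within: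
  fixes F F' :: "real \<Rightarrow> real"
  assumes "a \<le> s" "s \<le> t"
    and der: "\<And>u. s \<le> u \<Longrightarrow> u \<le> t \<Longrightarrow> (F has_real_derivative F' u) (at u within {a..})"
    and neg: "\<And>u. s \<le> u \<Longrightarrow> u \<le> t \<Longrightarrow> F' u \<le> 0"
  shows "F t \<le> F s"
proof (rule DERIV_nonpos_imp_decreasing_open[OF \<open>s \<le> t\<close>])
  fix u assume u: "s < u" "u < t"
  have "at u within {a..} = at u"
    by (rule at_within_interior) (use u assms(1) in auto)
  then show "\<exists>y. DERIV F u :> y \<and> y \<le> 0" using der[of u] neg[of u] u by auto
next
  show "continuous_on {s..t} F"
    unfolding continuous_on_eq_continuous_within
  proof
    fix u assume u: "u \<in> {s..t}"
    have "continuous (at u within {a..}) F" using der[of u] u by (auto intro: DERIV_continuous)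
    then show "continuous (at u within {s..t}) F"
      by (rule continuous_within_subset) (use assms(1) in auto)
  qed
qed

lemma deriv_compare:
  fixes F F' G G' :: "real \<Rightarrow> real"
  assumes "a \<le> s" "s \<le> t"
    and dF: "\<And>u. s \<le> u \<Longrightarrow> u \<le> t \<Longrightarrow> (F has_real_derivative F' u) (at u within {a..})"
    and dG: "\<And>u. s \<le> u \<Longrightarrow> u \<le> t \<Longrightarrow> (G has_real_derivative G' u) (at u within {a..})"
    and le: "\<And>u. s \<le> u \<Longrightarrow> u \<le> t \<Longrightarrow> F' u \<le> G' u"
  shows "F t - F s \<le> G t - G s"
proof -
  have "(\<lambda>u. F u - G u) t \<le> (\<lambda>u. F u - G u) s"
    by (rule antimono_deriv_within[OF assms(1,2), where F'="\<lambda>u. F' u - G' u"])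
       (auto intro!: DERIV_diff dF dG simp: le)
  then show ?thesis by simp
qed

lemma convex_grad_ineq:
  fixes f :: "'a::real_inner \<Rightarrow> real"
  assumes cvx: "convex_on UNIV f" and der: "(f has_derivative (\<lambda>h. g \<bullet> h)) (at u)"
  shows "f u + g \<bullet> (v - u) \<le> f v"
proof -
  let ?h = "\<lambda>s::real. f (u + s *\<^sub>R (v - u))"
  have hc: "convex_on UNIV ?h"
  proof (rule convex_onI)
    fix t x y :: real assume t: "0 < t" "t < 1"
    have "u + ((1 - t) * x + t * y) *\<^sub>R (v - u) = (1 - t) *\<^sub>R (u + x *\<^sub>R (v - u)) + t *\<^sub>R (u + y *\<^sub>R (v - u))"
      by (simp add: algebra_simps)
    then show "?h ((1 - t) *\<^sub>R x + t *\<^sub>R y) \<le> (1 - t) * ?h x + t * ?h y"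
      using convex_onD[OF cvx, of t "u + x *\<^sub>R (v - u)" "u + y *\<^sub>R (v - u)"] t by simp
  qed simp
  have d1: "((\<lambda>s::real. u + s *\<^sub>R (v - u)) has_derivative (\<lambda>s. s *\<^sub>R (v - u))) (at 0)"
    by (auto intro!: derivative_eq_intros)
  have "((\<lambda>s. ?h s) has_derivative (\<lambda>s. g \<bullet> (s *\<^sub>R (v - u)))) (at 0)"
    by (rule has_derivative_compose[OF d1]) (use der in simp)
  then have "(?h has_real_derivative g \<bullet> (v - u)) (at 0)"
    unfolding has_field_derivative_def
  proof (rule has_derivative_eq_rhs)
    show "(\<lambda>s. g \<bullet> (s *\<^sub>R (v - u))) = (*) (g \<bullet> (v - u))"
      by (rule ext) (simp add: mult.commute)
  qed
  from convex_on_imp_above_tangent[where x=1, OF hc connected_UNIV _ _ this[unfolded at_within_open[OF _ open_UNIV, symmetric]]]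
  have "?h 1 - ?h 0 \<ge> g \<bullet> (v - u) * (1 - 0)" by simp
  then show ?thesis by simp
qed

lemma antimono_limit:
  fixes h :: "real \<Rightarrow> real"
  assumes mono: "\<And>s t. a \<le> s \<Longrightarrow> s \<le> t \<Longrightarrow> h t \<le> h s"
    and lb: "\<And>t. a \<le> t \<Longrightarrow> b \<le> h t"
  shows "\<exists>L. (h \<longlongrightarrow> L) at_top \<and> (\<forall>t\<ge>a. L \<le> h t)"
proof -
  define L where "L = Inf (h ` {a..})"
  have bdd: "bdd_below (h ` {a..})" unfolding bdd_below_def using lb by auto
  have Lle: "\<And>t. a \<le> t \<Longrightarrow> L \<le> h t" by (auto simp: L_def intro!: cInf_lower bdd)
  have "(h \<longlongrightarrow> L) at_top"
  proof (rule order_tendstoI)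
    fix y assume "y < L"
    show "eventually (\<lambda>t. y < h t) at_top"
      using eventually_ge_at_top[of a] by (rule eventually_mono) (use Lle \<open>y < L\<close> in force)
  next
    fix y assume "L < y"
    then obtain s where s: "s \<in> {a..}" "h s < y" using cInf_lessD[of "h ` {a..}" y] by (auto simp: L_def)
    show "eventually (\<lambda>t. h t < y) at_top"
      using eventually_ge_at_top[of s] by (rule eventually_mono) (use mono s in force)
  qed
  then show ?thesis using Lle by blast
qed

lemma norm_diff_parallelogram:
  fixes x y :: "'a::real_inner"
  shows "(norm (x - y))\<^sup>2 = 2 * (norm x)\<^sup>2 + 2 * (norm y)\<^sup>2 - (norm (x + y))\<^sup>2"
  by (simp add: power2_norm_eq_inner inner_diff inner_add algebra_simps inner_commute)

lemma hull_point:
  fixes u :: "nat \<Rightarrow> 'a::{real_inner, complete_space}"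
  assumes bnd: "bounded (range u)"
  shows "\<exists>A. \<forall>C. closed C \<longrightarrow> convex C \<longrightarrow> eventually (\<lambda>n. u n \<in> C) sequentially \<longrightarrow> A \<in> C"
proof -
  define K where "K n = closure (convex hull (u ` {n..}))" for n
  have Kcl: "closed (K n)" for n by (simp add: K_def)
  have Kcvx: "convex (K n)" for n by (simp add: K_def convex_closure)
  have Kne: "u n \<in> K n" for n
    unfolding K_def by (rule subsetD[OF closure_subset], rule hull_inc) auto
  have Kmono: "K m \<subseteq> K n" if "n \<le> m" for n m
    unfolding K_def using that by (intro closure_mono hull_mono image_mono) auto
  obtain B where B: "\<And>n. norm (u n) \<le> B" using bnd by (auto simp: bounded_iff)
  have KB: "K n \<subseteq> cball 0 B" for n
    unfolding K_def
    by (intro closure_minimal hull_minimal) (use B in auto)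
  have Bpos: "0 \<le> B" using B[of 0] norm_ge_zero order_trans by blast
  define d where "d n = Inf (norm ` K n)" for n
  have bddK: "bdd_below (norm ` K n)" for n by (auto intro: bdd_belowI2[where m=0])
  have dle: "d n \<le> norm v" if "v \<in> K n" for n v
    unfolding d_def using that bddK by (auto intro!: cInf_lower)
  have d0: "0 \<le> d n" for n
    unfolding d_def using Kne[of n] by (auto intro!: cInf_greatest)
  have dB: "d n \<le> B" for n using dle[OF Kne[of n]] B[of n] by linarith
  have dmono: "incseq d"
  proof (rule incseq_SucI)
    fix n
    show "d n \<le> d (Suc n)"
      unfolding d_def[of "Suc n"] using Kne[of "Suc n"]
      by (intro cInf_greatest) (use dle Kmono[of n "Suc n"] in auto)
  qed
  define D where "D = Sup (range d)"
  have dD: "d \<longlonglongrightarrow> D" unfolding D_def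
    by (rule LIMSEQ_incseq_SUP[OF _ dmono]) (unfold bdd_above_def, use dB in auto)
  have dleD: "d n \<le> D" for n unfolding D_def
    by (rule cSup_upper) (unfold bdd_above_def, use dB in auto)
  define e where "e n = 1 / (real n + 1)" for n
  have epos: "0 < e n" for n by (simp add: e_def)
  have emono: "e m \<le> e n" if "n \<le> m" for n m
    unfolding e_def using that by (simp add: frac_le)
  have "\<exists>v. v \<in> K n \<and> norm v < d n + e n" for n
  proof -
    have "Inf (norm ` K n) < d n + e n" using epos[of n] by (simp add: d_def)
    then obtain w where "w \<in> norm ` K n" "w < d n + e n"
      using cInf_lessD[of "norm ` K n"] Kne[of n] by blast
    then show ?thesis by auto
  qed
  then obtain a where aK: "\<And>n. a n \<in> K n" and an: "\<And>n. norm (a n) < d n + e n" by metis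
  define r where "r n = 4 * ((D + e n)\<^sup>2 - (d n)\<^sup>2)" for n
  have est: "(norm (a n - a m))\<^sup>2 \<le> r n" if "n \<le> m" for n m
  proof -
    have am: "a m \<in> K n" using aK[of m] Kmono[OF that] by auto
    have "(1/2) *\<^sub>R a n + (1/2) *\<^sub>R a m \<in> K n"
      by (rule convexD[OF Kcvx aK am]) auto
    then have "d n \<le> norm ((1/2) *\<^sub>R (a n + a m))" using dle by (simp add: scaleR_add_right)
    then have "2 * d n \<le> norm (a n + a m)" by simp
    then have s1: "4 * (d n)\<^sup>2 \<le> (norm (a n + a m))\<^sup>2"
      using d0[of n] by (metis mult_2 power_mono add_nonneg_nonneg power_mult_distrib
          numeral_Bit0 numeral_One power2_eq_square[of 2] mult.commute)
    have "norm (a n) \<le> D + e n" using an[of n] dleD[of n] by linarith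
    then have s2: "(norm (a n))\<^sup>2 \<le> (D + e n)\<^sup>2" by (simp add: power_mono)
    have "norm (a m) \<le> D + e n" using an[of m] dleD[of m] emono[OF that] by linarith
    then have s3: "(norm (a m))\<^sup>2 \<le> (D + e n)\<^sup>2" by (simp add: power_mono)
    show ?thesis unfolding r_def norm_diff_parallelogram right_diff_distrib using s1 s2 s3 by linarith
  qed
  have r0: "r \<longlonglongrightarrow> 0"
  proof -
    have "e \<longlonglongrightarrow> 0" unfolding e_def
      using LIMSEQ_ignore_initial_segment[OF lim_1_over_n, of 1] by (simp add: add.commute)
    then have "r \<longlonglongrightarrow> 4 * ((D + 0)\<^sup>2 - D\<^sup>2)" unfolding r_def[abs_def]
      by (intro tendsto_intros dD)
    then show ?thesis by simp
  qed
  have "Cauchy a"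
  proof (rule metric_CauchyI)
    fix \<epsilon> :: real assume "\<epsilon> > 0"
    then have "eventually (\<lambda>n. r n < \<epsilon>\<^sup>2) sequentially"
      using r0 by (auto simp: order_tendsto_iff)
    then obtain M where M: "\<And>n. n \<ge> M \<Longrightarrow> r n < \<epsilon>\<^sup>2" by (auto simp: eventually_sequentially)
    have "dist (a m) (a n) < \<epsilon>" if "m \<ge> M" "n \<ge> M" for m n
    proof (cases "n \<le> m")
      case True
      then have "(dist (a m) (a n))\<^sup>2 < \<epsilon>\<^sup>2" using est[OF True] M[OF that(2)]
        by (simp add: dist_norm norm_minus_commute)
      then show ?thesis using \<open>\<epsilon> > 0\<close> by (simp add: power_less_imp_less_base)
    next
      case False
      then have "(dist (a m) (a n))\<^sup>2 < \<epsilon>\<^sup>2" using est[of m n] M[OF that(1)]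
        by (simp add: dist_norm)
      then show ?thesis using \<open>\<epsilon> > 0\<close> by (simp add: power_less_imp_less_base)
    qed
    then show "\<exists>M. \<forall>m\<ge>M. \<forall>n\<ge>M. dist (a m) (a n) < \<epsilon>" by blast
  qed
  then obtain A where aA: "a \<longlonglongrightarrow> A" using Cauchy_convergent_iff convergent_def by blast
  have AK: "A \<in> K n" for n
  proof (rule Lim_in_closed_set[OF Kcl _ _ aA])
    show "eventually (\<lambda>m. a m \<in> K n) sequentially"
      using eventually_ge_at_top[of n] by eventually_elim (use aK Kmono in blast)
  qed simp
  show ?thesis
  proof (intro exI allI impI)
    fix C :: "'a set" assume C: "closed C" "convex C" "eventually (\<lambda>n. u n \<in> C) sequentially"
    then obtain N where N: "\<And>n. n \<ge> N \<Longrightarrow> u n \<in> C" by (auto simp: eventually_sequentially)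
    have "K N \<subseteq> C" unfolding K_def
      by (intro closure_minimal hull_minimal C) (use N in auto)
    then show "A \<in> C" using AK[of N] by blast
  qed
qed

lemma rate_transfer:
  fixes \<tau> :: "real \<Rightarrow> real"
  assumes ev: "eventually (\<lambda>t. \<tau> t \<ge> C1 * (t - t0) powr \<theta>) at_top" and th: "\<theta> > 0" and C: "C1 > 0"
  shows "(\<lambda>t. ln (\<tau> t) / \<tau> t) \<in> O(\<lambda>t. ln t / t powr \<theta>)"
proof -
  define w where "w t = C1 * (t - t0) powr \<theta>" for t
  have wlim: "filterlim w at_top at_top" unfolding w_def using th C by real_asymp
  have "eventually (\<lambda>t. w t \<ge> exp 1) at_top" using wlim by (simp add: filterlim_at_top)
  then have 1: "eventually (\<lambda>t. norm (ln (\<tau> t) / \<tau> t) \<le> 1 * norm (ln (w t) / w t)) at_top"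
    using ev
  proof eventually_elim
    case (elim t)
    then have tw: "w t \<le> \<tau> t" by (simp add: w_def)
    have "exp (1::real) > 0" by (rule exp_gt_zero)
    then have pos: "\<tau> t > 0" "w t > 0" using elim tw by linarith+
    have "ln (\<tau> t) \<ge> 0" "ln (w t) \<ge> 0" using elim tw pos
      by (metis exp_gt_zero ln_exp ln_le_cancel_iff order.trans zero_le_one)+
    then show ?case using ln_x_over_x_mono[OF elim(1) tw] pos by simp
  qed
  have 2: "(\<lambda>t. ln (w t) / w t) \<in> O(\<lambda>t. ln t / t powr \<theta>)"
    unfolding w_def using th C by real_asymp
  show ?thesis by (rule landau_o.big_trans[OF bigoI[OF 1] 2])
qed

lemma average_upper:
  fixes a b \<tau> \<tau>' :: "real \<Rightarrow> real"
  assumes der: "\<And>t. t \<ge> t0 \<Longrightarrow> ((\<lambda>s. \<tau> s * a s) has_real_derivative \<tau>' t * b t) (at t within {t0..})"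
    and dtau: "\<And>t. t \<ge> t0 \<Longrightarrow> (\<tau> has_real_derivative \<tau>' t) (at t within {t0..})"
    and pos: "\<And>t. t \<ge> t0 \<Longrightarrow> \<tau> t > 0" and pos': "\<And>t. t \<ge> t0 \<Longrightarrow> \<tau>' t > 0"
    and lim: "filterlim \<tau> at_top at_top"
    and bc: "eventually (\<lambda>t. b t \<le> c) at_top" and eps: "\<epsilon> > 0"
  shows "eventually (\<lambda>t. a t < c + \<epsilon>) at_top"
proof -
  obtain N where N: "\<And>t. t \<ge> N \<Longrightarrow> b t \<le> c" using bc by (auto simp: eventually_at_top_linorder)
  define T where "T = max N t0"
  define K where "K = \<tau> T * a T - c * \<tau> T"
  have "eventually (\<lambda>t. \<tau> t \<ge> (\<bar>K\<bar> + 1) / \<epsilon>) at_top" using lim by (simp add: filterlim_at_top)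
  then show ?thesis using eventually_ge_at_top[of T]
  proof eventually_elim
    case (elim t)
    have tT: "T \<le> t" "t0 \<le> T" using elim by (auto simp: T_def)
    have "\<tau> t * a t - \<tau> T * a T \<le> c * \<tau> t - c * \<tau> T"
    proof (rule deriv_compare[OF tT(2,1)])
      fix u assume u: "T \<le> u" "u \<le> t"
      then have u0: "u \<ge> t0" "u \<ge> N" using tT by (auto simp: T_def)
      show "((\<lambda>s. \<tau> s * a s) has_real_derivative \<tau>' u * b u) (at u within {t0..})" using der u0 by simp
      show "((\<lambda>s. c * \<tau> s) has_real_derivative c * \<tau>' u) (at u within {t0..})"
        using dtau u0 by (auto intro: DERIV_cmult)
      show "\<tau>' u * b u \<le> c * \<tau>' u" using N[OF u0(2)] pos'[OF u0(1)] by (simp add: mult.commute mult_left_mono)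
    qed
    then have "\<tau> t * a t \<le> c * \<tau> t + K" by (simp add: K_def)
    moreover have "\<tau> t > 0" using pos tT by simp
    moreover have "K < \<epsilon> * \<tau> t" using elim(1) eps by (simp add: field_simps)
    ultimately have "\<tau> t * a t < \<tau> t * (c + \<epsilon>)" by (simp add: algebra_simps)
    then show ?case using \<open>\<tau> t > 0\<close> by simp
  qed
qed

lemma average_limit:
  fixes a b \<tau> \<tau>' :: "real \<Rightarrow> real"
  assumes der: "\<And>t. t \<ge> t0 \<Longrightarrow> ((\<lambda>s. \<tau> s * a s) has_real_derivative \<tau>' t * b t) (at t within {t0..})"
    and dtau: "\<And>t. t \<ge> t0 \<Longrightarrow> (\<tau> has_real_derivative \<tau>' t) (at t within {t0..})"
    and pos: "\<And>t. t \<ge> t0 \<Longrightarrow> \<tau> t > 0" and pos': "\<And>t. t \<ge> t0 \<Longrightarrow> \<tau>' t > 0"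
    and lim: "filterlim \<tau> at_top at_top"
    and bl: "(b \<longlongrightarrow> \<beta>) at_top"
  shows "(a \<longlongrightarrow> \<beta>) at_top"
proof (rule order_tendstoI)
  fix y assume y: "\<beta> < y"
  have "eventually (\<lambda>t. b t < (\<beta> + y) / 2) at_top" using y by (intro order_tendstoD(2)[OF bl]) simp
  then have "eventually (\<lambda>t. b t \<le> (\<beta> + y) / 2) at_top" by (auto elim: eventually_mono)
  from average_upper[OF der dtau pos pos' lim this, of "(y - \<beta>) / 2"] y
  show "eventually (\<lambda>t. a t < y) at_top" by (simp add: field_simps)
next
  fix y assume y: "y < \<beta>"
  have der': "((\<lambda>s. \<tau> s * (- a s)) has_real_derivative \<tau>' t * (- b t)) (at t within {t0..})" if "t \<ge> t0" for t
    using DERIV_minus[OF der[OF that]] by simp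
  have "eventually (\<lambda>t. b t > (\<beta> + y) / 2) at_top" using y by (intro order_tendstoD(1)[OF bl]) simp
  then have "eventually (\<lambda>t. - b t \<le> - ((\<beta> + y) / 2)) at_top" by (auto elim: eventually_mono)
  from average_upper[OF der' dtau pos pos' lim this, of "(\<beta> - y) / 2"] y
  show "eventually (\<lambda>t. y < a t) at_top" by (auto elim!: eventually_mono simp: field_simps)
qed

lemma chain_grad:
  assumes "(\<gamma> has_vector_derivative \<gamma>') (at t within S)"
    and "(f has_derivative (\<lambda>h. g \<bullet> h)) (at (\<gamma> t))"
  shows "((\<lambda>s. f (\<gamma> s)) has_real_derivative g \<bullet> \<gamma>') (at t within S)"
proof -
  have "((\<lambda>s. f (\<gamma> s)) has_derivative (\<lambda>h. g \<bullet> (h *\<^sub>R \<gamma>'))) (at t within S)"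
    by (rule has_derivative_compose[OF assms(1)[unfolded has_vector_derivative_def] assms(2)])
  then show ?thesis unfolding has_field_derivative_def
    by (rule has_derivative_eq_rhs) (rule ext, simp add: mult.commute)
qed

lemma sq_der:
  fixes \<gamma> :: "real \<Rightarrow> 'a::real_inner"
  assumes "(\<gamma> has_vector_derivative \<gamma>') (at t within S)"
  shows "((\<lambda>s. (\<gamma> s - q) \<bullet> (\<gamma> s - q)) has_real_derivative 2 * ((\<gamma> t - q) \<bullet> \<gamma>')) (at t within S)"
proof -
  have d: "((\<lambda>s. \<gamma> s - q) has_derivative (\<lambda>h. h *\<^sub>R \<gamma>')) (at t within S)"
    using assms unfolding has_vector_derivative_def by (auto intro!: derivative_eq_intros)
  from has_derivative_inner[OF d d] show ?thesis unfolding has_field_derivative_def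
    by (rule has_derivative_eq_rhs) (rule ext, simp add: inner_commute algebra_simps)
qed

locale dyn =
  fixes f :: "'a::{real_inner,complete_space} \<Rightarrow> real"
    and gradf :: "'a \<Rightarrow> 'a"
    and t0 :: real
    and \<tau> \<tau>' \<tau>'' :: "real \<Rightarrow> real"
    and x x' x'' :: "real \<Rightarrow> 'a"
  assumes A: "assumption_A f gradf"
    and t0_pos: "t0 > 0"
    and tau_pos: "\<And>t. t \<ge> t0 \<Longrightarrow> \<tau> t > 0"
    and tau_d1: "\<And>t. t \<ge> t0 \<Longrightarrow> (\<tau> has_real_derivative \<tau>' t) (at t within {t0..})"
    and tau_d2: "\<And>t. t \<ge> t0 \<Longrightarrow> (\<tau>' has_real_derivative \<tau>'' t) (at t within {t0..})"
    and tau'_pos: "\<And>t. t \<ge> t0 \<Longrightarrow> \<tau>' t > 0"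
    and tau_lim: "filterlim \<tau> at_top at_top"
    and x_d1: "\<And>t. t \<ge> t0 \<Longrightarrow> (x has_vector_derivative x' t) (at t within {t0..})"
    and x_d2: "\<And>t. t \<ge> t0 \<Longrightarrow> (x' has_vector_derivative x'' t) (at t within {t0..})"
    and ode: "\<And>t. t \<ge> t0 \<Longrightarrow>
       x'' t + ((2 * (\<tau>' t)\<^sup>2 - \<tau> t * \<tau>'' t) / (\<tau> t * \<tau>' t)) *\<^sub>R x' t
             + ((\<tau>' t)\<^sup>2 / \<tau> t) *\<^sub>R gradf (x t + (\<tau> t / \<tau>' t) *\<^sub>R x' t) = 0"
begin

definition z where "z t = x t + (\<tau> t / \<tau>' t) *\<^sub>R x' t"

lemma cvx: "convex_on UNIV f" and fder: "(f has_derivative (\<lambda>h. gradf u \<bullet> h)) (at u)"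
  and Sne: "argmin_set f \<noteq> {}"
  using A by (auto simp: assumption_A_def)

lemma grad_ineq: "f u + gradf u \<bullet> (v - u) \<le> f v"
  by (rule convex_grad_ineq[OF cvx fder])

lemma f_cont: "continuous_on UNIV f"
  by (rule continuous_at_imp_continuous_on) (auto intro: has_derivative_continuous[OF fder])

definition p where "p = (SOME p. p \<in> argmin_set f)"

lemma p_in: "p \<in> argmin_set f"
  unfolding p_def using Sne by (auto intro: someI_ex)

lemma p_min: "f p \<le> f v" using p_in by (auto simp: argmin_set_def)

lemma S_val: "q \<in> argmin_set f \<Longrightarrow> f q = f p"
  using p_min by (auto simp: argmin_set_def intro: antisym)

lemma inf_eq: "Inf (range f) = f p"
  by (rule cInf_eq_minimum) (auto simp: p_min)

lemma z_der:
  assumes t: "t \<ge> t0"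
  shows "(z has_vector_derivative (- \<tau>' t *\<^sub>R gradf (z t))) (at t within {t0..})"
proof -
  have tp: "\<tau> t > 0" "\<tau>' t > 0" using tau_pos tau'_pos t by auto
  have d1: "((\<lambda>s. \<tau> s / \<tau>' s) has_real_derivative
      (\<tau>' t * \<tau>' t - \<tau> t * \<tau>'' t) / (\<tau>' t * \<tau>' t)) (at t within {t0..})"
    using DERIV_divide[OF tau_d1[OF t] tau_d2[OF t]] tp by simp
  have zf: "z = (\<lambda>s. x s + (\<tau> s / \<tau>' s) *\<^sub>R x' s)" by (rule ext) (simp add: z_def)
  let ?k = "(\<tau>' t * \<tau>' t - \<tau> t * \<tau>'' t) / (\<tau>' t * \<tau>' t)"
  let ?c1 = "(2 * (\<tau>' t)\<^sup>2 - \<tau> t * \<tau>'' t) / (\<tau> t * \<tau>' t)"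
  let ?c2 = "(\<tau>' t)\<^sup>2 / \<tau> t"
  let ?g = "gradf (z t)"
  have d2: "(z has_vector_derivative x' t + ((\<tau> t / \<tau>' t) *\<^sub>R x'' t + ?k *\<^sub>R x' t)) (at t within {t0..})"
    unfolding zf by (intro has_vector_derivative_add x_d1 t has_vector_derivative_scaleR d1 x_d2)
  have x2: "x'' t = - (?c1 *\<^sub>R x' t) - ?c2 *\<^sub>R ?g"
    using ode[OF t] unfolding z_def[symmetric] by (simp add: algebra_simps eq_neg_iff_add_eq_0)
  have e1: "1 + ?k - (\<tau> t / \<tau>' t) * ?c1 = 0" using tp by (simp add: field_simps power2_eq_square)
  have e2: "(\<tau> t / \<tau>' t) * ?c2 = \<tau>' t" using tp by (simp add: field_simps power2_eq_square)
  have "x' t + ((\<tau> t / \<tau>' t) *\<^sub>R x'' t + ?k *\<^sub>R x' t)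
      = (1 + ?k - (\<tau> t / \<tau>' t) * ?c1) *\<^sub>R x' t - ((\<tau> t / \<tau>' t) * ?c2) *\<^sub>R ?g"
    unfolding x2 by (simp add: algebra_simps)
  also have "\<dots> = - \<tau>' t *\<^sub>R ?g" unfolding e1 e2 by simp
  finally show ?thesis using d2 by simp
qed

lemma zx_rel: "t \<ge> t0 \<Longrightarrow> \<tau> t *\<^sub>R x' t = \<tau>' t *\<^sub>R (z t - x t)"
  using tau'_pos[of t] by (simp add: z_def)

lemma tx_der:
  assumes t: "t \<ge> t0"
  shows "((\<lambda>s. \<tau> s *\<^sub>R x s) has_vector_derivative \<tau>' t *\<^sub>R z t) (at t within {t0..})"
proof -
  have "((\<lambda>s. \<tau> s *\<^sub>R x s) has_vector_derivative \<tau> t *\<^sub>R x' t + \<tau>' t *\<^sub>R x t) (at t within {t0..})"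
    by (rule has_vector_derivative_scaleR[OF tau_d1[OF t] x_d1[OF t]])
  also have "\<tau> t *\<^sub>R x' t + \<tau>' t *\<^sub>R x t = \<tau>' t *\<^sub>R z t"
    unfolding zx_rel[OF t] by (simp add: algebra_simps)
  finally show ?thesis .
qed

lemma tau_mono:
  assumes st: "t0 \<le> s" "s \<le> t" shows "\<tau> s \<le> \<tau> t"
proof -
  have "(\<lambda>u. - \<tau> u) t \<le> (\<lambda>u. - \<tau> u) s"
  proof (rule antimono_deriv_within[OF st, where F'="\<lambda>u. - \<tau>' u"])
    fix u assume "s \<le> u" "u \<le> t"
    then have u: "t0 \<le> u" using st by simp
    show "((\<lambda>u. - \<tau> u) has_real_derivative - \<tau>' u) (at u within {t0..})"
      by (rule DERIV_minus[OF tau_d1[OF u]])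
    show "- \<tau>' u \<le> 0" using tau'_pos[OF u] by simp
  qed
  then show ?thesis by simp
qed

lemma fz_der: "t \<ge> t0 \<Longrightarrow> ((\<lambda>s. f (z s)) has_real_derivative gradf (z t) \<bullet> (- \<tau>' t *\<^sub>R gradf (z t))) (at t within {t0..})"
  by (rule chain_grad[OF z_der fder])

lemma fz_mono:
  assumes st: "t0 \<le> s" "s \<le> t" shows "f (z t) \<le> f (z s)"
proof (rule antimono_deriv_within[OF st, where F="\<lambda>s. f (z s)" and F'="\<lambda>u. gradf (z u) \<bullet> (- \<tau>' u *\<^sub>R gradf (z u))"])
  fix u assume "s \<le> u" "u \<le> t"
  then have u: "t0 \<le> u" using st by simp
  show "((\<lambda>s. f (z s)) has_real_derivative gradf (z u) \<bullet> (- \<tau>' u *\<^sub>R gradf (z u))) (at u within {t0..})"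
    by (rule fz_der[OF u])
  show "gradf (z u) \<bullet> (- \<tau>' u *\<^sub>R gradf (z u)) \<le> 0" using tau'_pos[OF u] by simp
qed

definition h where "h q t = (z t - q) \<bullet> (z t - q)"

lemma h_der: "t \<ge> t0 \<Longrightarrow> (h q has_real_derivative 2 * ((z t - q) \<bullet> (- \<tau>' t *\<^sub>R gradf (z t)))) (at t within {t0..})"
  unfolding h_def[abs_def] by (rule sq_der[OF z_der])

lemma key2:
  assumes q: "q \<in> argmin_set f" and st: "t0 \<le> s" "s \<le> t"
  shows "2 * ((\<tau> t - \<tau> s) * (f (z t) - f p)) \<le> h q s - h q t"
proof -
  let ?c = "f (z t) - f p"
  have "(\<lambda>u. h q u + (2 * ?c) * \<tau> u) t \<le> (\<lambda>u. h q u + (2 * ?c) * \<tau> u) s"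
  proof (rule antimono_deriv_within[OF st])
    fix u assume u: "s \<le> u" "u \<le> t"
    then have u0: "u \<ge> t0" using st by simp
    show "((\<lambda>u. h q u + (2 * ?c) * \<tau> u) has_real_derivative
        2 * ((z u - q) \<bullet> (- \<tau>' u *\<^sub>R gradf (z u))) + (2 * ?c) * \<tau>' u) (at u within {t0..})"
      by (intro DERIV_add h_der u0 DERIV_cmult tau_d1)
    have gi: "f (z u) + gradf (z u) \<bullet> (q - z u) \<le> f q" by (rule grad_ineq)
    have "(z u - q) \<bullet> gradf (z u) \<ge> f (z u) - f p" using gi S_val[OF q]
      by (simp add: inner_diff_left inner_diff_right inner_commute)
    moreover have "f (z t) \<le> f (z u)" using fz_mono u0 u by simp
    moreover have "\<tau>' u > 0" using tau'_pos u0 by simp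
    ultimately have "\<tau>' u * ((z u - q) \<bullet> gradf (z u)) \<ge> \<tau>' u * ?c"
      by (intro mult_left_mono) auto
    then show "2 * ((z u - q) \<bullet> (- \<tau>' u *\<^sub>R gradf (z u))) + (2 * ?c) * \<tau>' u \<le> 0"
      by (simp add: algebra_simps)
  qed
  then show ?thesis by (simp add: algebra_simps)
qed

end

context dyn begin

lemma fz_ge: "0 \<le> f (z t) - f p" using p_min[of "z t"] by simp

lemma h_mono:
  assumes q: "q \<in> argmin_set f" and st: "t0 \<le> s" "s \<le> t"
  shows "h q t \<le> h q s"
proof -
  have "0 \<le> 2 * ((\<tau> t - \<tau> s) * (f (z t) - f p))"
    using tau_mono[OF st] fz_ge by simp
  then show ?thesis using key2[OF q st] by linarith
qed

lemma h_nonneg: "0 \<le> h q t" by (simp add: h_def)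

lemma h_lim:
  assumes q: "q \<in> argmin_set f"
  shows "\<exists>L. (h q \<longlongrightarrow> L) at_top \<and> (\<forall>t\<ge>t0. L \<le> h q t)"
  by (rule antimono_limit[where b=0]) (auto intro: h_mono[OF q] h_nonneg)

lemma tau_g:
  assumes e: "\<epsilon> > 0"
  shows "eventually (\<lambda>t. \<tau> t * (f (z t) - f p) < \<epsilon>) at_top"
proof -
  obtain L where L: "(h p \<longlongrightarrow> L) at_top" "\<forall>t\<ge>t0. L \<le> h p t" using h_lim[OF p_in] by blast
  have "eventually (\<lambda>t. h p t < L + \<epsilon>) at_top" using e by (intro order_tendstoD(2)[OF L(1)]) simp
  then obtain N where N: "\<And>t. t \<ge> N \<Longrightarrow> h p t < L + \<epsilon>" by (auto simp: eventually_at_top_linorder)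
  define S where "S = max N t0"
  have hS: "h p S < L + \<epsilon>" using N by (simp add: S_def)
  have "eventually (\<lambda>t. \<tau> t \<ge> 2 * \<tau> S) at_top" using tau_lim by (simp add: filterlim_at_top)
  then show ?thesis using eventually_ge_at_top[of S]
  proof eventually_elim
    case (elim t)
    have S0: "t0 \<le> S" by (simp add: S_def)
    have "2 * ((\<tau> t - \<tau> S) * (f (z t) - f p)) \<le> h p S - h p t" by (rule key2[OF p_in S0 elim(2)])
    moreover have "L \<le> h p t" using L(2) S0 elim(2) by simp
    moreover have "\<tau> t * (f (z t) - f p) \<le> (2 * (\<tau> t - \<tau> S)) * (f (z t) - f p)"
      by (rule mult_right_mono) (use elim fz_ge in auto)
    ultimately show ?case using hS by linarith
  qed
qed

lemma fz_small:
  assumes e: "\<epsilon> > 0"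
  shows "eventually (\<lambda>t. f (z t) - f p \<le> \<epsilon>) at_top"
proof -
  have "eventually (\<lambda>t. \<tau> t \<ge> 1) at_top" using tau_lim by (simp add: filterlim_at_top)
  then show ?thesis using tau_g[OF e]
  proof eventually_elim
    case (elim t)
    have "1 * (f (z t) - f p) \<le> \<tau> t * (f (z t) - f p)"
      by (rule mult_right_mono) (use elim fz_ge in auto)
    then have "f (z t) - f p \<le> \<tau> t * (f (z t) - f p)" by simp
    then show ?case using elim by linarith
  qed
qed

lemma phi_bound:
  assumes e: "\<epsilon> > 0"
  shows "eventually (\<lambda>t. \<tau> t * (f (x t) - f p) \<le> \<epsilon> * ln (\<tau> t)) at_top"
proof -
  have "\<epsilon> / 2 > 0" using e by simp
  from tau_g[OF this] obtain N where N: "\<And>t. t \<ge> N \<Longrightarrow> \<tau> t * (f (z t) - f p) < \<epsilon> / 2"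
    by (auto simp: eventually_at_top_linorder)
  define T where "T = max N t0"
  have T0: "t0 \<le> T" by (simp add: T_def)
  define F where "F u = \<tau> u * (f (x u) - f p)" for u
  define G where "G u = (\<epsilon> / 2) * ln (\<tau> u)" for u
  have Fle: "F t - F T \<le> G t - G T" if t: "T \<le> t" for t
  proof (rule deriv_compare[OF T0 t, where F'="\<lambda>u. \<tau>' u * (f (x u) - f p) + \<tau> u * (gradf (x u) \<bullet> x' u)"
        and G'="\<lambda>u. (\<epsilon> / 2) * (1 / \<tau> u * \<tau>' u)"])
    fix u assume u: "T \<le> u" "u \<le> t"
    then have u0: "t0 \<le> u" "N \<le> u" using T0 by (auto simp: T_def)
    show "(F has_real_derivative \<tau>' u * (f (x u) - f p) + \<tau> u * (gradf (x u) \<bullet> x' u)) (at u within {t0..})"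
      unfolding F_def[abs_def]
      using DERIV_mult[OF tau_d1[OF u0(1)] DERIV_diff[OF chain_grad[OF x_d1[OF u0(1)] fder] DERIV_const[of "f p"]]]
      by (simp add: mult.commute)
    show "(G has_real_derivative (\<epsilon> / 2) * (1 / \<tau> u * \<tau>' u)) (at u within {t0..})"
      unfolding G_def[abs_def]
      by (rule DERIV_cmult[OF DERIV_chain2[OF DERIV_ln_divide[OF tau_pos[OF u0(1)]] tau_d1[OF u0(1)]]])
    have tp: "\<tau> u > 0" "\<tau>' u > 0" using tau_pos tau'_pos u0 by auto
    have "\<tau> u * (gradf (x u) \<bullet> x' u) = gradf (x u) \<bullet> (\<tau> u *\<^sub>R x' u)" by simp
    also have "\<dots> = \<tau>' u * (gradf (x u) \<bullet> (z u - x u))" unfolding zx_rel[OF u0(1)] by simp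
    finally have eq: "\<tau> u * (gradf (x u) \<bullet> x' u) = \<tau>' u * (gradf (x u) \<bullet> (z u - x u))" .
    have gi: "f (x u) + gradf (x u) \<bullet> (z u - x u) \<le> f (z u)" by (rule grad_ineq)
    have "\<tau>' u * (f (x u) - f p) + \<tau> u * (gradf (x u) \<bullet> x' u)
        = \<tau>' u * (f (x u) + gradf (x u) \<bullet> (z u - x u) - f p)" unfolding eq by (simp add: algebra_simps)
    also have "\<dots> \<le> \<tau>' u * (f (z u) - f p)" using gi tp by (intro mult_left_mono) auto
    also have "\<dots> \<le> \<tau>' u * ((\<epsilon> / 2) / \<tau> u)"
    proof (rule mult_left_mono)
      show "f (z u) - f p \<le> \<epsilon> / 2 / \<tau> u" using N[OF u0(2)] tp by (simp add: field_simps)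
    qed (use tp in simp)
    also have "\<dots> = (\<epsilon> / 2) * (1 / \<tau> u * \<tau>' u)" by simp
    finally show "\<tau>' u * (f (x u) - f p) + \<tau> u * (gradf (x u) \<bullet> x' u) \<le> (\<epsilon> / 2) * (1 / \<tau> u * \<tau>' u)" .
  qed
  have "filterlim (\<lambda>t. ln (\<tau> t)) at_top at_top" by (rule filterlim_compose[OF ln_at_top tau_lim])
  then have "eventually (\<lambda>t. ln (\<tau> t) \<ge> (2 / \<epsilon>) * (F T - G T)) at_top" by (simp add: filterlim_at_top)
  then show ?thesis using eventually_ge_at_top[of T]
  proof eventually_elim
    case (elim t)
    have "F t \<le> G t + (F T - G T)" using Fle[OF elim(2)] by simp
    also have "F T - G T \<le> (\<epsilon> / 2) * ln (\<tau> t)" using elim(1) e by (simp add: field_simps)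
    finally show ?case by (simp add: F_def G_def)
  qed
qed

lemma part1: "(\<lambda>t. f (x t) - Inf (range f)) \<in> o[at_top](\<lambda>t. ln (\<tau> t) / \<tau> t)"
  unfolding inf_eq
proof (rule landau_o.smallI)
  fix c :: real assume c: "c > 0"
  have "eventually (\<lambda>t. \<tau> t > 1) at_top" using tau_lim by (simp add: filterlim_at_top_dense)
  then show "eventually (\<lambda>t. norm (f (x t) - f p) \<le> c * norm (ln (\<tau> t) / \<tau> t)) at_top"
    using phi_bound[OF c]
  proof eventually_elim
    case (elim t)
    then have tp: "\<tau> t > 0" "ln (\<tau> t) > 0" by auto
    have "f (x t) - f p \<ge> 0" using p_min by simp
    moreover have "f (x t) - f p \<le> c * (ln (\<tau> t) / \<tau> t)"
      using elim(2) tp by (simp add: field_simps)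
    ultimately show ?case using tp by simp
  qed
qed

end

context dyn begin

lemma z_bnd: "\<exists>B. \<forall>t\<ge>t0. norm (z t) \<le> B"
proof (intro exI allI impI)
  fix t assume t: "t0 \<le> t"
  have "(norm (z t - p))\<^sup>2 \<le> (norm (z t0 - p))\<^sup>2"
    using h_mono[OF p_in order_refl t] by (simp add: h_def power2_norm_eq_inner)
  then have "norm (z t - p) \<le> norm (z t0 - p)" by (rule power2_le_imp_le) simp
  then show "norm (z t) \<le> norm p + norm (z t0 - p)"
    using norm_triangle_ineq[of "z t - p" p] by simp
qed

lemma lpq:
  assumes q1: "q1 \<in> argmin_set f" and q2: "q2 \<in> argmin_set f"
  shows "\<exists>l. ((\<lambda>t. z t \<bullet> (q1 - q2)) \<longlongrightarrow> l) at_top"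
proof -
  obtain L1 where L1: "(h q1 \<longlongrightarrow> L1) at_top" using h_lim[OF q1] by blast
  obtain L2 where L2: "(h q2 \<longlongrightarrow> L2) at_top" using h_lim[OF q2] by blast
  have eq0: "h q2 t - h q1 t + q1 \<bullet> q1 - q2 \<bullet> q2 = 2 * (z t \<bullet> (q1 - q2))" for t
    by (simp add: h_def inner_diff_left inner_diff_right inner_commute)
  have eq: "z t \<bullet> (q1 - q2) = (h q2 t - h q1 t + q1 \<bullet> q1 - q2 \<bullet> q2) / 2" for t
  proof -
    have "(2::real) * y / 2 = y" for y by simp
    from this[of "z t \<bullet> (q1 - q2)"] show ?thesis unfolding eq0[of t, symmetric] by (rule sym)
  qed
  have "((\<lambda>t. (h q2 t - h q1 t + q1 \<bullet> q1 - q2 \<bullet> q2) / 2) \<longlongrightarrow> (L2 - L1 + q1 \<bullet> q1 - q2 \<bullet> q2) / 2) at_top"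
    by (intro tendsto_intros L1 L2) auto
  then show ?thesis unfolding eq by blast
qed

lemma sublevel_convex: "convex {v. f v \<le> c}"
  unfolding convex_alt
proof (intro ballI allI impI)
  fix a b and u :: real assume a: "a \<in> {v. f v \<le> c}" and b: "b \<in> {v. f v \<le> c}" and u: "0 \<le> u \<and> u \<le> 1"
  have "f ((1 - u) *\<^sub>R a + u *\<^sub>R b) \<le> (1 - u) * f a + u * f b"
    using convex_onD[OF cvx] u by simp
  also have "\<dots> \<le> (1 - u) * c + u * c"
    using a b u by (intro add_mono mult_left_mono) auto
  finally show "(1 - u) *\<^sub>R a + u *\<^sub>R b \<in> {v. f v \<le> c}" by (simp add: algebra_simps)
qed

lemma hull_S:
  assumes tn: "filterlim tn at_top sequentially"
    and hull: "\<forall>C. closed C \<longrightarrow> convex C \<longrightarrow> eventually (\<lambda>n. z (tn n) \<in> C) sequentially \<longrightarrow> A \<in> C"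
  shows "A \<in> argmin_set f"
proof -
  have "f A \<le> f p"
  proof (rule field_le_epsilon)
    fix e :: real assume e: "0 < e"
    have cl: "closed {v. f v \<le> f p + e}"
      by (rule closed_Collect_le) (use f_cont in auto)
    have "eventually (\<lambda>n. z (tn n) \<in> {v. f v \<le> f p + e}) sequentially"
      using filterlim_iff[THEN iffD1, OF tn, rule_format, OF fz_small[OF e]] by (auto elim: eventually_mono)
    then have "A \<in> {v. f v \<le> f p + e}" using hull cl sublevel_convex by blast
    then show "f A \<le> f p + e" by simp
  qed
  then show ?thesis using p_min by (auto simp: argmin_set_def intro: order_trans)
qed

lemma hull_val:
  assumes tn: "filterlim tn at_top sequentially"
    and hull: "\<forall>C. closed C \<longrightarrow> convex C \<longrightarrow> eventually (\<lambda>n. z (tn n) \<in> C) sequentially \<longrightarrow> A \<in> C"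
    and l: "((\<lambda>t. z t \<bullet> w) \<longlongrightarrow> l) at_top"
  shows "A \<bullet> w = l"
proof -
  have ev: "eventually (\<lambda>n. P (tn n)) sequentially" if "eventually P at_top" for P
    using filterlim_iff[THEN iffD1, OF tn] that by blast
  have up: "A \<bullet> w \<le> l + e" if e: "e > 0" for e
  proof -
    have "eventually (\<lambda>n. z (tn n) \<in> {v. w \<bullet> v \<le> l + e}) sequentially"
      using ev[OF order_tendstoD(2)[OF l, of "l + e"]] e by (auto simp: inner_commute elim!: eventually_mono)
    then have "A \<in> {v. w \<bullet> v \<le> l + e}" using hull closed_halfspace_le convex_halfspace_le by blast
    then show ?thesis by (simp add: inner_commute)
  qed
  have lo: "l \<le> A \<bullet> w + e" if e: "e > 0" for e
  proof -
    have "eventually (\<lambda>n. z (tn n) \<in> {v. w \<bullet> v \<ge> l - e}) sequentially"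
      using ev[OF order_tendstoD(1)[OF l, of "l - e"]] e by (auto simp: inner_commute elim!: eventually_mono)
    then have "A \<in> {v. w \<bullet> v \<ge> l - e}" using hull closed_halfspace_ge convex_halfspace_ge by blast
    then show ?thesis by (simp add: inner_commute)
  qed
  show ?thesis using field_le_epsilon[OF up] field_le_epsilon[OF lo] by simp
qed

end

context dyn begin

lemma z_weak: "\<exists>A\<in>argmin_set f. \<forall>w. ((\<lambda>t. z t \<bullet> w) \<longlongrightarrow> A \<bullet> w) at_top"
proof -
  obtain B where B: "\<And>t. t \<ge> t0 \<Longrightarrow> norm (z t) \<le> B" using z_bnd by blast
  define t1 where "t1 n = t0 + real n" for n
  have t1lim: "filterlim t1 at_top sequentially" unfolding t1_def
    by (rule filterlim_tendsto_add_at_top[OF tendsto_const filterlim_real_sequentially])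
  have bnd1: "bounded (range (\<lambda>n. z (t1 n)))" unfolding bounded_iff
    using B by (intro exI[of _ B]) (auto simp: t1_def)
  obtain A1 where hull1: "\<forall>C. closed C \<longrightarrow> convex C \<longrightarrow> eventually (\<lambda>n. z (t1 n) \<in> C) sequentially \<longrightarrow> A1 \<in> C"
    using hull_point[OF bnd1] by blast
  have A1S: "A1 \<in> argmin_set f" by (rule hull_S[OF t1lim hull1])
  have claim: "eventually (\<lambda>t. (z t - A1) \<bullet> w < e) at_top" if e: "e > 0" for w e
  proof (rule ccontr)
    assume ne: "\<not> eventually (\<lambda>t. (z t - A1) \<bullet> w < e) at_top"
    have fr: "\<exists>t\<ge>N. e \<le> (z t - A1) \<bullet> w" for N
      using ne unfolding eventually_at_top_linorder by (auto simp: not_less)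
    define t2 where "t2 n = (SOME t. t \<ge> max t0 (real n) \<and> e \<le> (z t - A1) \<bullet> w)" for n
    have t2: "t2 n \<ge> max t0 (real n) \<and> e \<le> (z (t2 n) - A1) \<bullet> w" for n
      unfolding t2_def by (rule someI_ex) (use fr in blast)
    have t2lim: "filterlim t2 at_top sequentially"
      by (rule filterlim_at_top_mono[OF filterlim_real_sequentially]) (use t2 in \<open>auto intro: always_eventually\<close>)
    have bnd2: "bounded (range (\<lambda>n. z (t2 n)))" unfolding bounded_iff
      using B t2 by (intro exI[of _ B]) auto
    obtain A2 where hull2: "\<forall>C. closed C \<longrightarrow> convex C \<longrightarrow> eventually (\<lambda>n. z (t2 n) \<in> C) sequentially \<longrightarrow> A2 \<in> C"
      using hull_point[OF bnd2] by blast
    have A2S: "A2 \<in> argmin_set f" by (rule hull_S[OF t2lim hull2])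
    have "eventually (\<lambda>n. z (t2 n) \<in> {v. w \<bullet> v \<ge> e + A1 \<bullet> w}) sequentially"
    proof (intro always_eventually allI)
      fix n
      have "(z (t2 n) - A1) \<bullet> w = w \<bullet> z (t2 n) - A1 \<bullet> w" by (simp add: inner_diff_left inner_diff_right inner_commute[of _ w])
      then show "z (t2 n) \<in> {v. w \<bullet> v \<ge> e + A1 \<bullet> w}" using t2[of n] by simp
    qed
    then have A2w: "A2 \<in> {v. w \<bullet> v \<ge> e + A1 \<bullet> w}"
      using hull2 closed_halfspace_ge convex_halfspace_ge by blast
    obtain l where l: "((\<lambda>t. z t \<bullet> (A1 - A2)) \<longlongrightarrow> l) at_top" using lpq[OF A1S A2S] by blast
    have "A1 \<bullet> (A1 - A2) = l" by (rule hull_val[OF t1lim hull1 l])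
    moreover have "A2 \<bullet> (A1 - A2) = l" by (rule hull_val[OF t2lim hull2 l])
    ultimately have "(A1 - A2) \<bullet> (A1 - A2) = 0" by (simp add: inner_diff_left)
    then have "A1 = A2" by simp
    then show False using A2w e by (simp add: inner_commute)
  qed
  have "((\<lambda>t. z t \<bullet> w) \<longlongrightarrow> A1 \<bullet> w) at_top" for w
  proof (rule tendstoI)
    fix e :: real assume e: "e > 0"
    show "eventually (\<lambda>t. dist (z t \<bullet> w) (A1 \<bullet> w) < e) at_top"
      using claim[OF e, of w] claim[OF e, of "- w"]
      by eventually_elim (simp add: dist_real_def inner_diff_left abs_less_iff)
  qed
  then show ?thesis using A1S by blast
qed

lemma x_weak: "\<exists>A\<in>argmin_set f. weakly_tendsto_at_top x A"
proof -
  obtain A where A: "A \<in> argmin_set f" and zw: "\<And>w. ((\<lambda>t. z t \<bullet> w) \<longlongrightarrow> A \<bullet> w) at_top"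
    using z_weak by blast
  have der: "((\<lambda>s. \<tau> s * (x s \<bullet> w)) has_real_derivative \<tau>' t * (z t \<bullet> w)) (at t within {t0..})"
    if t: "t0 \<le> t" for t w
  proof -
    have "((\<lambda>s. (\<tau> s *\<^sub>R x s) \<bullet> w) has_real_derivative (\<tau>' t *\<^sub>R z t) \<bullet> w) (at t within {t0..})"
      unfolding has_field_derivative_def
      by (rule has_derivative_eq_rhs[OF has_derivative_inner_left[OF tx_der[OF t, unfolded has_vector_derivative_def]]])
         (rule ext, simp add: mult.commute)
    then show ?thesis by simp
  qed
  have "((\<lambda>t. x t \<bullet> w) \<longlongrightarrow> A \<bullet> w) at_top" for w
    by (rule average_limit[OF der tau_d1 tau_pos tau'_pos tau_lim zw])
  then show ?thesis using A unfolding weakly_tendsto_at_top_def by blast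
qed

end

theorem mainTheorem10:
  fixes f :: "'a::{real_inner,complete_space} \<Rightarrow> real"
    and gradf :: "'a \<Rightarrow> 'a"
    and t0 :: real
    and \<tau> \<tau>' \<tau>'' :: "real \<Rightarrow> real"
    and x x' x'' :: "real \<Rightarrow> 'a"
  assumes A: "assumption_A f gradf"
    and t0_pos: "t0 > 0"
    and tau_pos: "\<And>t. t \<ge> t0 \<Longrightarrow> \<tau> t > 0"
    and tau_d1: "\<And>t. t \<ge> t0 \<Longrightarrow> (\<tau> has_real_derivative \<tau>' t) (at t within {t0..})"
    and tau_d2: "\<And>t. t \<ge> t0 \<Longrightarrow> (\<tau>' has_real_derivative \<tau>'' t) (at t within {t0..})"
    and tau_C2: "continuous_on {t0..} \<tau>''"
    and tau'_pos: "\<And>t. t \<ge> t0 \<Longrightarrow> \<tau>' t > 0"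
    and tau_lim: "filterlim \<tau> at_top at_top"
    and x_d1: "\<And>t. t \<ge> t0 \<Longrightarrow> (x has_vector_derivative x' t) (at t within {t0..})"
    and x_d2: "\<And>t. t \<ge> t0 \<Longrightarrow> (x' has_vector_derivative x'' t) (at t within {t0..})"
    and x_C2: "continuous_on {t0..} x''"
    and ode: "\<And>t. t \<ge> t0 \<Longrightarrow>
       x'' t + ((2 * (\<tau>' t)\<^sup>2 - \<tau> t * \<tau>'' t) / (\<tau> t * \<tau>' t)) *\<^sub>R x' t
             + ((\<tau>' t)\<^sup>2 / \<tau> t) *\<^sub>R gradf (x t + (\<tau> t / \<tau>' t) *\<^sub>R x' t) = 0"
  shows "(\<lambda>t. f (x t) - Inf (range f)) \<in> o[at_top](\<lambda>t. ln (\<tau> t) / \<tau> t)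
     \<and> (\<exists>z\<in>argmin_set f. weakly_tendsto_at_top x z)
     \<and> (\<forall>\<theta> C1. \<theta> > 0 \<and> C1 > 0 \<and> (\<forall>\<^sub>F t in at_top. \<tau> t \<ge> C1 * (t - t0) powr \<theta>)
          \<longrightarrow> (\<lambda>t. f (x t) - Inf (range f)) \<in> o[at_top](\<lambda>t. ln t / t powr \<theta>))"
proof -
  interpret D: dyn f gradf t0 \<tau> \<tau>' \<tau>'' x x' x''
    by unfold_locales (fact A t0_pos tau_pos tau_d1 tau_d2 tau'_pos tau_lim x_d1 x_d2 ode)+
  have p3: "(\<lambda>t. f (x t) - Inf (range f)) \<in> o[at_top](\<lambda>t. ln t / t powr \<theta>)"
    if "\<theta> > 0 \<and> C1 > 0 \<and> (\<forall>\<^sub>F t in at_top. \<tau> t \<ge> C1 * (t - t0) powr \<theta>)" for \<theta> C1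
    using that by (intro landau_o.small_big_trans[OF D.part1 rate_transfer]) auto
  show ?thesis using D.part1 D.x_weak p3 by blast
qed

end
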